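(* Let $L$ be a semiprime right Leibniz algebra. Then $\mathrm{Ann}(L)=\mathrm{ran}(L)=\{0\}$.
   Context: A right Leibniz algebra satisfies $[x,[y,z]]=[[x,y],z]-[[x,z],y]$. Ideals: subspaces $I$ with $[I,L]\subseteq I$, $[L,I]\subseteq I$. $L$ is semiprime if $[I,I]\ne\{0\}$ for every nonzero ideal $I$. $\mathrm{ran}(L)=\{x\in L:[y,x]=0\ \forall y\in L\}$, $\mathrm{lan}(L)=\{x\in L:[x,y]=0\ \forall y\in L\}$, $\mathrm{Ann}(L)=\mathrm{lan}(L)\cap\mathrm{ran}(L)$. *)

theory Defs
  imports Complex_Main
begin

definition right_leibniz_algebra ::
  "('k::field \<Rightarrow> 'v::ab_group_add \<Rightarrow> 'v) \<Rightarrow> ('v \<Rightarrow> 'v \<Rightarrow> 'v) \<Rightarrow> bool" where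
  "right_leibniz_algebra scale b \<longleftrightarrow>
     vector_space scale \<and>
     (\<forall>x y z. b (x + y) z = b x z + b y z) \<and>
     (\<forall>x y z. b x (y + z) = b x y + b x z) \<and>
     (\<forall>c x y. b (scale c x) y = scale c (b x y)) \<and>
     (\<forall>c x y. b x (scale c y) = scale c (b x y)) \<and>
     (\<forall>x y z. b x (b y z) = b (b x y) z - b (b x z) y)"

definition lideal ::
  "('k::field \<Rightarrow> 'v::ab_group_add \<Rightarrow> 'v) \<Rightarrow> ('v \<Rightarrow> 'v \<Rightarrow> 'v) \<Rightarrow> 'v set \<Rightarrow> bool" where
  "lideal scale b I \<longleftrightarrow> module.subspace scale I \<and>
     (\<forall>x\<in>I. \<forall>y. b x y \<in> I) \<and> (\<forall>x\<in>I. \<forall>y. b y x \<in> I)"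

definition bracket_set ::
  "('k::field \<Rightarrow> 'v::ab_group_add \<Rightarrow> 'v) \<Rightarrow> ('v \<Rightarrow> 'v \<Rightarrow> 'v) \<Rightarrow> 'v set \<Rightarrow> 'v set \<Rightarrow> 'v set" where
  "bracket_set scale b I J = module.span scale {b x y | x y. x \<in> I \<and> y \<in> J}"

definition semiprime ::
  "('k::field \<Rightarrow> 'v::ab_group_add \<Rightarrow> 'v) \<Rightarrow> ('v \<Rightarrow> 'v \<Rightarrow> 'v) \<Rightarrow> bool" where
  "semiprime scale b \<longleftrightarrow>
     (\<forall>I. lideal scale b I \<and> I \<noteq> {0} \<longrightarrow> bracket_set scale b I I \<noteq> {0})"

definition ran :: "('v \<Rightarrow> 'v \<Rightarrow> 'v::zero) \<Rightarrow> 'v set" where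
  "ran b = {x. \<forall>y. b y x = 0}"

definition lan :: "('v \<Rightarrow> 'v \<Rightarrow> 'v::zero) \<Rightarrow> 'v set" where
  "lan b = {x. \<forall>y. b x y = 0}"

definition Ann :: "('v \<Rightarrow> 'v \<Rightarrow> 'v::zero) \<Rightarrow> 'v set" where
  "Ann b = lan b \<inter> ran b"

end

theory Submission
  imports Defs
begin

theorem proposition2p6:
  fixes scale :: "'k::field \<Rightarrow> 'v::ab_group_add \<Rightarrow> 'v"
    and b :: "'v \<Rightarrow> 'v \<Rightarrow> 'v"
  assumes "right_leibniz_algebra scale b"
    and "semiprime scale b"
  shows "Ann b = {0} \<and> ran b = {0}"
proof -
  have vs: "vector_space scale" using assms(1) unfolding right_leibniz_algebra_def by blast
  then interpret V: vector_space scale .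
  have addl: "\<And>x y z. b (x + y) z = b x z + b y z"
   and addr: "\<And>x y z. b x (y + z) = b x y + b x z"
   and scr: "\<And>c x y. b x (scale c y) = scale c (b x y)"
   and leib: "\<And>x y z. b x (b y z) = b (b x y) z - b (b x z) y"
    using assms(1) unfolding right_leibniz_algebra_def by blast+
  have z1: "b x 0 = 0" for x using addr[of x 0 0] by simp
  have z2: "b 0 x = 0" for x using addl[of 0 0 x] by simp
  have sub: "V.subspace (ran b)"
    unfolding V.subspace_def ran_def by (simp add: z1 addr scr)
  have id: "lideal scale b (ran b)"
    unfolding lideal_def
  proof (intro conjI ballI allI)
    show "V.subspace (ran b)" by (rule sub)
  next
    fix x y assume "x \<in> ran b"
    then show "b x y \<in> ran b" unfolding ran_def proof (intro CollectI allI)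
      fix w assume h: "x \<in> {x. \<forall>y. b y x = 0}"
      have "b w (b x y) = b (b w x) y - b (b w y) x" by (rule leib)
      also have "\<dots> = 0" using h z2 by simp
      finally show "b w (b x y) = 0" .
    qed
  next
    fix x y assume "x \<in> ran b"
    then show "b y x \<in> ran b" unfolding ran_def using z1 by (simp add: ran_def)
  qed
  have "{b x y | x y. x \<in> ran b \<and> y \<in> ran b} = {0}"
  proof (rule set_eqI, rule iffI)
    fix v assume "v \<in> {b x y | x y. x \<in> ran b \<and> y \<in> ran b}"
    then obtain x y where "v = b x y" "y \<in> ran b" by blast
    then show "v \<in> {0}" unfolding ran_def by simp
  next
    fix v :: 'v assume "v \<in> {0}"
    then have "v = b 0 0" using z1 by simp
    moreover have "(0::'v) \<in> ran b" unfolding ran_def using z1 by simp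
    ultimately show "v \<in> {b x y | x y. x \<in> ran b \<and> y \<in> ran b}" by blast
  qed
  then have "bracket_set scale b (ran b) (ran b) = {0}"
    unfolding bracket_set_def using V.span_insert_0[of "{}"] by simp
  then have r: "ran b = {0}" using assms(2) id unfolding semiprime_def by blast
  moreover have "0 \<in> Ann b" unfolding Ann_def lan_def ran_def using z1 z2 by simp
  ultimately show ?thesis unfolding Ann_def by auto
qed

end
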